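(* Let $G$ be a symmetrically factorizable Lie group with subgroups $G_\pm$ and conjugating element $\theta$. If $\theta^2$ admits a unique factorization $\theta^2=(\theta^2)_+(\theta^2)_-^{-1}$ with $(\theta^2)_\pm\in G_\pm$, then $\tilde\theta:=(\theta^2)_+^{-1}\theta$ is also a conjugating element and it is unipotent.
   Context: A Lie group $G$ with Lie algebra $\mathfrak g$ is symmetrically factorizable if $\mathfrak g=\mathfrak g_+\oplus\mathfrak g_-$ as a vector space, where $\mathfrak g_\pm$ are Lie subalgebras, and there is an element $\theta\in G$ (a conjugating element) with $\theta G_-=G_+\theta$, where $G_\pm$ are the Lie subgroups corresponding to $\mathfrak g_\pm$. For $g$ in an open dense neighbourhood of the identity one writes $g=g_+g_-^{-1}$ with $g_\pm\in G_\pm$. Here ``$\tilde\theta$ is unipotent'' is used in the sense $\tilde\theta^2=1$. *)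

theory Defs
  imports "HOL-Algebra.Coset"
begin

definition conjugating_element :: "('a, 'b) monoid_scheme \<Rightarrow> 'a set \<Rightarrow> 'a set \<Rightarrow> 'a \<Rightarrow> bool" where
  "conjugating_element G Gp Gm t \<longleftrightarrow>
     t \<in> carrier G \<and> t <#\<^bsub>G\<^esub> Gm = Gp #>\<^bsub>G\<^esub> t"

definition sym_factorizable :: "('a, 'b) monoid_scheme \<Rightarrow> 'a set \<Rightarrow> 'a set \<Rightarrow> 'a \<Rightarrow> bool" where
  "sym_factorizable G Gp Gm \<theta> \<longleftrightarrow>
     group G \<and> subgroup Gp G \<and> subgroup Gm G \<and> conjugating_element G Gp Gm \<theta>"

end

theory Submission
  imports Defs
begin

lemma conj_elems:
  assumes "group G" "subgroup Gp G" "subgroup Gm G" "conjugating_element G Gp Gm t"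
  shows "\<And>x. x \<in> Gm \<Longrightarrow> \<exists>y\<in>Gp. t \<otimes>\<^bsub>G\<^esub> x = y \<otimes>\<^bsub>G\<^esub> t"
    and "\<And>y. y \<in> Gp \<Longrightarrow> \<exists>x\<in>Gm. t \<otimes>\<^bsub>G\<^esub> x = y \<otimes>\<^bsub>G\<^esub> t"
proof -
  have eq: "t <#\<^bsub>G\<^esub> Gm = Gp #>\<^bsub>G\<^esub> t" using assms(4) unfolding conjugating_element_def by simp
  fix x assume "x \<in> Gm"
  then have "t \<otimes>\<^bsub>G\<^esub> x \<in> t <#\<^bsub>G\<^esub> Gm" unfolding l_coset_def by blast
  then have "t \<otimes>\<^bsub>G\<^esub> x \<in> Gp #>\<^bsub>G\<^esub> t" using eq by simp
  then show "\<exists>y\<in>Gp. t \<otimes>\<^bsub>G\<^esub> x = y \<otimes>\<^bsub>G\<^esub> t" unfolding r_coset_def by blast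
next
  have eq: "t <#\<^bsub>G\<^esub> Gm = Gp #>\<^bsub>G\<^esub> t" using assms(4) unfolding conjugating_element_def by simp
  fix y assume "y \<in> Gp"
  then have "y \<otimes>\<^bsub>G\<^esub> t \<in> Gp #>\<^bsub>G\<^esub> t" unfolding r_coset_def by blast
  then have "y \<otimes>\<^bsub>G\<^esub> t \<in> t <#\<^bsub>G\<^esub> Gm" using eq by simp
  then show "\<exists>x\<in>Gm. t \<otimes>\<^bsub>G\<^esub> x = y \<otimes>\<^bsub>G\<^esub> t" unfolding l_coset_def by fastforce
qed

theorem mainTheorem5:
  fixes G (structure) and Gp Gm :: "'a set" and \<theta> p m :: 'a
  assumes "sym_factorizable G Gp Gm \<theta>"
    and "\<exists>!pm. fst pm \<in> Gp \<and> snd pm \<in> Gm \<and> \<theta> \<otimes> \<theta> = fst pm \<otimes> inv (snd pm)"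
    and "p \<in> Gp" and "m \<in> Gm" and "\<theta> \<otimes> \<theta> = p \<otimes> inv m"
  shows "conjugating_element G Gp Gm (inv p \<otimes> \<theta>)
         \<and> (inv p \<otimes> \<theta>) \<otimes> (inv p \<otimes> \<theta>) = \<one>"
proof -
  have grp: "group G" and sp: "subgroup Gp G" and sm: "subgroup Gm G"
    and ce: "conjugating_element G Gp Gm \<theta>"
    using assms(1) unfolding sym_factorizable_def by auto
  interpret group G by (rule grp)
  have tc: "\<theta> \<in> carrier G" using ce unfolding conjugating_element_def by simp
  have pc: "p \<in> carrier G" using subgroup.mem_carrier[OF sp assms(3)] by simp
  have mc: "m \<in> carrier G" using subgroup.mem_carrier[OF sm assms(4)] by simp
  have cancel: "\<And>a. a \<in> carrier G \<Longrightarrow> p \<otimes> (inv p \<otimes> a) = a"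
    using pc by (simp add: m_assoc[symmetric])
  have cancel2: "\<And>a. a \<in> carrier G \<Longrightarrow> inv p \<otimes> (p \<otimes> a) = a"
    using pc by (simp add: m_assoc[symmetric])
  have gcancel: "\<And>a b. a \<in> carrier G \<Longrightarrow> b \<in> carrier G \<Longrightarrow> a \<otimes> (inv a \<otimes> b) = b"
    by (simp add: m_assoc[symmetric])
  note A = conj_elems(1)[OF grp sp sm ce]
  note B = conj_elems(2)[OF grp sp sm ce]
  define q where "q = inv p \<otimes> \<theta>"
  have qc: "q \<in> carrier G" unfolding q_def using pc tc by simp
  have "q <# Gm = Gp #> q"
  proof
    show "q <# Gm \<subseteq> Gp #> q"
    proof
      fix z assume "z \<in> q <# Gm"
      then obtain x where x: "x \<in> Gm" "z = q \<otimes> x" unfolding l_coset_def by blast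
      then obtain y where y: "y \<in> Gp" "\<theta> \<otimes> x = y \<otimes> \<theta>" using A by blast
      have xc: "x \<in> carrier G" using subgroup.mem_carrier[OF sm x(1)] by simp
      have yc: "y \<in> carrier G" using subgroup.mem_carrier[OF sp y(1)] by simp
      have "z = inv p \<otimes> (\<theta> \<otimes> x)" using x pc tc xc by (simp add: q_def m_assoc gcancel cancel2)
      also have "\<dots> = (inv p \<otimes> y \<otimes> p) \<otimes> q" using y pc tc yc by (simp add: q_def m_assoc cancel)
      finally have "z = (inv p \<otimes> y \<otimes> p) \<otimes> q" .
      moreover have "inv p \<otimes> y \<otimes> p \<in> Gp" using sp y(1) assms(3)
        by (simp add: subgroup.m_closed subgroup.m_inv_closed)
      ultimately show "z \<in> Gp #> q" unfolding r_coset_def by blast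
    qed
  next
    show "Gp #> q \<subseteq> q <# Gm"
    proof
      fix z assume "z \<in> Gp #> q"
      then obtain y where y: "y \<in> Gp" "z = y \<otimes> q" unfolding r_coset_def by blast
      have yc: "y \<in> carrier G" using subgroup.mem_carrier[OF sp y(1)] by simp
      have "p \<otimes> y \<otimes> inv p \<in> Gp" using sp y(1) assms(3)
        by (simp add: subgroup.m_closed subgroup.m_inv_closed)
      then obtain x where x: "x \<in> Gm" "\<theta> \<otimes> x = p \<otimes> y \<otimes> inv p \<otimes> \<theta>" using B by blast
      have xc: "x \<in> carrier G" using subgroup.mem_carrier[OF sm x(1)] by simp
      have "q \<otimes> x = inv p \<otimes> (\<theta> \<otimes> x)" using pc tc xc by (simp add: q_def m_assoc gcancel cancel2)
      also have "\<dots> = y \<otimes> q" using x(2) pc tc yc by (simp add: q_def m_assoc cancel2)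
      finally have "z = q \<otimes> x" using y by simp
      then show "z \<in> q <# Gm" using x(1) unfolding l_coset_def by blast
    qed
  qed
  then have qce: "conjugating_element G Gp Gm q" using qc unfolding conjugating_element_def by simp
  note A' = conj_elems(1)[OF grp sp sm qce]
  note B' = conj_elems(2)[OF grp sp sm qce]
  have triv: "x = \<one>" if "x \<in> Gp" "x \<in> Gm" for x
  proof -
    have xc: "x \<in> carrier G" using subgroup.mem_carrier[OF sm that(2)] by simp
    have "fst (p \<otimes> x, m \<otimes> x) \<in> Gp \<and> snd (p \<otimes> x, m \<otimes> x) \<in> Gm \<and>
          \<theta> \<otimes> \<theta> = fst (p \<otimes> x, m \<otimes> x) \<otimes> inv (snd (p \<otimes> x, m \<otimes> x))"
      using that assms(3,4,5) sp sm xc pc mc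
      by (simp add: subgroup.m_closed inv_mult_group m_assoc gcancel)
    moreover have "fst (p, m) \<in> Gp \<and> snd (p, m) \<in> Gm \<and> \<theta> \<otimes> \<theta> = fst (p, m) \<otimes> inv (snd (p, m))"
      using assms(3,4,5) by simp
    ultimately have "(p \<otimes> x, m \<otimes> x) = (p, m)" using assms(2) by blast
    then have "p \<otimes> x = p \<otimes> \<one>" using pc by simp
    then show "x = \<one>" using pc xc by simp
  qed
  obtain x where x: "x \<in> Gm" "q \<otimes> x = p \<otimes> q" using B'[OF assms(3)] by blast
  have xc: "x \<in> carrier G" using subgroup.mem_carrier[OF sm x(1)] by simp
  have "q \<otimes> p \<otimes> q = inv m"
  proof -
    have "q \<otimes> p \<otimes> q = inv p \<otimes> (\<theta> \<otimes> \<theta>)" using pc tc by (simp add: q_def m_assoc gcancel cancel2)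
    also have "\<dots> = inv m" using assms(5) pc mc by (simp add: m_assoc[symmetric])
    finally show ?thesis .
  qed
  then have "q \<otimes> q \<otimes> x = inv m" using x(2) qc pc xc by (simp add: m_assoc)
  then have qq: "q \<otimes> q = inv m \<otimes> inv x" using qc xc mc
    by (metis inv_closed m_closed r_inv m_assoc r_one)
  have qqm: "q \<otimes> q \<in> Gm" using qq sm x(1) assms(4)
    by (simp add: subgroup.m_closed subgroup.m_inv_closed)
  obtain y where y: "y \<in> Gp" "q \<otimes> (q \<otimes> q) = y \<otimes> q" using A'[OF qqm] by blast
  have yc: "y \<in> carrier G" using subgroup.mem_carrier[OF sp y(1)] by simp
  have "q \<otimes> q = y" using y(2) qc yc by (metis m_assoc m_closed right_cancel)
  then have "q \<otimes> q \<in> Gp" using y(1) by simp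
  then have "q \<otimes> q = \<one>" using triv qqm by blast
  then show ?thesis using qce unfolding q_def by simp
qed

end
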